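(* Let $\Sigma=\{a\}$, $k=4$, and $\alpha=\big((_1\,\backslash4\,a)_1\,(_2\,\backslash3)_2\,(_3\,\backslash2\,a)_3\,(_4\,\backslash1\,\backslash3)_4\big)^\ast$. Then $L(\alpha)=\{a^{n(n+7)(2n+1)/6} : n\in\mathbb{N}\}$.
   Context: For $k\ge1$, $[k]=\{1,\dots,k\}$, $B_k=\{[_i,\,]_i:i\in[k]\}$ fresh brackets; $g$ fixes letters of $\Sigma$ and erases brackets. $\mathcal{R}_k(\alpha)$: the regular language over $\Sigma\uplus B_k\uplus[k]$ obtained by reading the rewb $\alpha$ as a regular expression with $\backslash i$ as the letter $i$ and $(_i\alpha_0)_i$ as $[_i\mathcal{R}_k(\alpha_0)]_i$. Dereferencing $\mathcal{D}_k$: repeatedly take the leftmost number $i\in[k]$ in the current string; if no $[_i$ lies to its left delete it (unbound references denote $\varepsilon$); else take the nearest $[_i$ to its left; if no $]_i$ lies between them the result is undefined; else replace this $i$ by $g(u)$, $u$ the string strictly between that $[_i$ and the first subsequent $]_i$; when no numbers remain delete all brackets. $L(\alpha)=\{\mathcal{D}_k(v):v\in\mathcal{R}_k(\alpha)\}$. *)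

theory Defs
  imports Main
begin

(* Symbols of the extended alphabet  Sigma (+) B_k (+) [k] *)
datatype 'a sym = Letter 'a | Opn nat | Cls nat | Ref nat

(* regular expressions with backreferences (rewbs) *)
datatype 'a rewb =
    Empty
  | Eps
  | Lit 'a
  | Conc "'a rewb" "'a rewb"
  | Alt "'a rewb" "'a rewb"
  | Star "'a rewb"
  | Grp nat "'a rewb"
  | BRef nat

definition lstar :: "'b list set \<Rightarrow> 'b list set" where
  "lstar A = {concat ws | ws. set ws \<subseteq> A}"

fun RL :: "'a rewb \<Rightarrow> 'a sym list set" where
  "RL Empty = {}"
| "RL Eps = {[]}"
| "RL (Lit x) = {[Letter x]}"
| "RL (Conc r s) = {u @ v | u v. u \<in> RL r \<and> v \<in> RL s}"
| "RL (Alt r s) = RL r \<union> RL s"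
| "RL (Star r) = lstar (RL r)"
| "RL (Grp i r) = {[Opn i] @ w @ [Cls i] | w. w \<in> RL r}"
| "RL (BRef i) = {[Ref i]}"

fun g :: "'a sym list \<Rightarrow> 'a list" where
  "g [] = []"
| "g (Letter x # w) = x # g w"
| "g (_ # w) = g w"

fun isRef :: "'a sym \<Rightarrow> bool" where
  "isRef (Ref _) = True"
| "isRef _ = False"

fun refnum :: "'a sym \<Rightarrow> nat" where
  "refnum (Ref i) = i"
| "refnum _ = 0"

definition nrefs :: "'a sym list \<Rightarrow> nat" where
  "nrefs v = length (filter isRef v)"

lemma nrefs_g [simp]: "nrefs (map Letter (g u)) = 0"
  by (induction u rule: g.induct) (auto simp: nrefs_def)

lemma nrefs_append [simp]: "nrefs (u @ v) = nrefs u + nrefs v"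
  by (simp add: nrefs_def)

lemma find_idx_less:
  assumes "find (\<lambda>j. isRef (v ! j)) [0..<length v] = Some p"
  shows "p < length v" "isRef (v ! p)"
  using assms by (auto simp: find_Some_iff)

lemma nrefs_split:
  assumes "p < length v" "isRef (v ! p)"
  shows "nrefs v = Suc (nrefs (take p v) + nrefs (drop (Suc p) v))"
proof -
  have "v = take p v @ [v ! p] @ drop (Suc p) v"
    using assms(1) by (simp add: id_take_nth_drop)
  then have "nrefs v = nrefs (take p v @ [v ! p] @ drop (Suc p) v)" by simp
  also have "\<dots> = Suc (nrefs (take p v) + nrefs (drop (Suc p) v))"
    using assms(2) by (simp add: nrefs_def)
  finally show ?thesis .
qed

(* Dereferencing D_k (None = undefined).  Step: take the leftmost number i
   (at position p); pre = prefix to its left, post = suffix to its right. *)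
function deref :: "'a sym list \<Rightarrow> 'a list option" where
  "deref v =
    (case find (\<lambda>j. isRef (v ! j)) [0..<length v] of
       None \<Rightarrow> Some (g v)
     | Some p \<Rightarrow>
        (let i = refnum (v ! p); pre = take p v; post = drop (Suc p) v in
         if Opn i \<notin> set pre then deref (pre @ post)
         else
           (let q = (GREATEST q. q < length pre \<and> pre ! q = Opn i);
                between = drop (Suc q) pre in
            if Cls i \<notin> set between then None
            else deref (pre @ map Letter (g (takeWhile (\<lambda>s. s \<noteq> Cls i) between)) @ post))))"
  by pat_completeness auto
termination
  apply (relation "measure nrefs")
    apply simp
   apply (simp add: Let_def)
   apply (frule find_idx_less(1), drule find_idx_less(2))
   apply (drule (1) nrefs_split, simp)
  apply (simp add: Let_def)
  apply (frule find_idx_less(1), drule find_idx_less(2))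
  apply (drule (1) nrefs_split, simp)
  done

definition lang :: "'a rewb \<Rightarrow> 'a list set" where
  "lang r = {w. \<exists>v \<in> RL r. deref v = Some w}"

datatype sigma = a

definition alpha11 :: "sigma rewb" where
  "alpha11 = Star
     (Conc (Grp 1 (Conc (BRef 4) (Lit a)))
     (Conc (Grp 2 (BRef 3))
     (Conc (Grp 3 (Conc (BRef 2) (Lit a)))
           (Grp 4 (Conc (BRef 1) (BRef 3))))))"

end

theory Submission
  imports Defs
begin

definition rf :: "'a sym list \<Rightarrow> bool" where
  "rf P = (\<forall>x\<in>set P. \<not> isRef x)"

lemma rf_simps[simp]: "rf []" "rf (x # xs) = (\<not> isRef x \<and> rf xs)" "rf (xs @ ys) = (rf xs \<and> rf ys)"
  "rf (replicate n x) = (n = 0 \<or> \<not> isRef x)"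
  by (auto simp: rf_def)

lemma find_first:
  assumes "rf P"
  shows "find (\<lambda>j. isRef ((P @ Ref i # S) ! j)) [0..<length (P @ Ref i # S)] = Some (length P)"
proof -
  have "\<forall>j<length P. \<not> isRef (P ! j)" using assms nth_mem unfolding rf_def by blast
  then show ?thesis by (auto simp: find_Some_iff nth_append)
qed

lemma find_none:
  assumes "rf v"
  shows "find (\<lambda>j. isRef (v ! j)) [0..<length v] = None"
  using assms nth_mem unfolding rf_def by (auto simp: find_None_iff)

lemma deref_rf: "rf v \<Longrightarrow> deref v = Some (g v)"
  by (subst deref.simps) (simp add: find_none)

lemma deref_unbound:
  assumes "rf P" "Opn i \<notin> set P"
  shows "deref (P @ Ref i # S) = deref (P @ S)"
  apply (subst deref.simps[of "P @ Ref i # S"])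
  apply (simp only: find_first[OF assms(1)] option.case Let_def)
  apply (simp add: assms)
  done

lemma greatest_pos:
  assumes "Opn i \<notin> set (W @ Cls i # P2)"
  shows "(GREATEST q. q < length (P1 @ Opn i # W @ Cls i # P2) \<and> (P1 @ Opn i # W @ Cls i # P2) ! q = Opn i) = length P1"
proof (rule Greatest_equality)
  show "length P1 < length (P1 @ Opn i # W @ Cls i # P2) \<and> (P1 @ Opn i # W @ Cls i # P2) ! length P1 = Opn i"
    by simp
next
  fix y assume y: "y < length (P1 @ Opn i # W @ Cls i # P2) \<and> (P1 @ Opn i # W @ Cls i # P2) ! y = Opn i"
  show "y \<le> length P1"
  proof (rule ccontr)
    assume "\<not> y \<le> length P1"
    then obtain k where k: "y = Suc (length P1) + k" by (metis le_iff_add not_less_eq_eq)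
    with y have "k < length (W @ Cls i # P2)" "(W @ Cls i # P2) ! k = Opn i"
      by (auto simp: nth_append)
    then have "Opn i \<in> set (W @ Cls i # P2)" by (metis nth_mem)
    with assms show False by blast
  qed
qed

lemma drop_Suc_len: "drop (Suc (length xs)) (xs @ y # ys) = ys"
  by (induction xs) auto

lemma deref_bound:
  assumes "rf P1" "rf W" "rf P2" "Opn i \<notin> set W" "Opn i \<notin> set P2" "Cls i \<notin> set W"
  shows "deref (P1 @ Opn i # W @ Cls i # P2 @ Ref i # S) = deref (P1 @ Opn i # W @ Cls i # P2 @ map Letter (g W) @ S)"
proof -
  let ?P = "P1 @ Opn i # W @ Cls i # P2"
  have f: "find (\<lambda>j. isRef ((?P @ Ref i # S) ! j)) [0..<length (?P @ Ref i # S)] = Some (length ?P)"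
    by (rule find_first) (simp add: assms)
  have gr: "(GREATEST q. q < length ?P \<and> ?P ! q = Opn i) = length P1"
    by (rule greatest_pos) (use assms in auto)
  have dr: "drop (Suc (length P1)) ?P = W @ Cls i # P2" by simp
  have tw: "takeWhile (\<lambda>s. s \<noteq> Cls i) (W @ Cls i # P2) = W"
    using assms(6) by (induction W) auto
  have nthP: "(?P @ Ref i # S) ! length ?P = Ref i" by (rule nth_append_length)
  have takeP: "take (length ?P) (?P @ Ref i # S) = ?P" by simp
  have dropP: "drop (Suc (length ?P)) (?P @ Ref i # S) = S" by (rule drop_Suc_len)
  have "deref (?P @ Ref i # S) = deref (?P @ map Letter (g W) @ S)"
    apply (subst deref.simps[of "?P @ Ref i # S"])
    apply (simp only: f option.case Let_def)
    apply (simp only: nthP takeP dropP gr dr tw refnum.simps)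
    apply simp
    done
  then show ?thesis by simp
qed

lemma g_append[simp]: "g (xs @ ys) = g xs @ g ys"
  by (induction xs rule: g.induct) auto

lemma g_rep[simp]: "g (replicate n (Letter x)) = replicate n x"
  by (induction n) auto

abbreviation rl :: "nat \<Rightarrow> sigma sym list" where
  "rl n \<equiv> replicate n (Letter a)"

definition blk :: "sigma sym list" where
  "blk = [Opn 1, Ref 4, Letter a, Cls 1, Opn 2, Ref 3, Cls 2, Opn 3, Ref 2, Letter a, Cls 3,
          Opn 4, Ref 1, Ref 3, Cls 4]"

definition cb :: "nat \<Rightarrow> nat \<Rightarrow> nat \<Rightarrow> nat \<Rightarrow> sigma sym list" where
  "cb y1 y2 y3 y4 = Opn 1 # rl y1 @ Cls 1 # Opn 2 # rl y2 @ Cls 2 # Opn 3 # rl y3 @ Cls 3 # Opn 4 # rl y4 @ [Cls 4]"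

lemma rf_cb[simp]: "rf (cb y1 y2 y3 y4)"
  by (simp add: cb_def)

lemma blk_first: "deref (blk @ S) = deref (cb 1 0 1 2 @ S)"
proof -
  have s1: "deref ([Opn 1] @ Ref 4 # Letter a # Cls 1 # Opn 2 # Ref 3 # Cls 2 # Opn 3 # Ref 2 # Letter a # Cls 3 # Opn 4 # Ref 1 # Ref 3 # Cls 4 # S)
     = deref ([Opn 1] @ Letter a # Cls 1 # Opn 2 # Ref 3 # Cls 2 # Opn 3 # Ref 2 # Letter a # Cls 3 # Opn 4 # Ref 1 # Ref 3 # Cls 4 # S)"
    by (rule deref_unbound) auto
  have s2: "deref ([Opn 1, Letter a, Cls 1, Opn 2] @ Ref 3 # Cls 2 # Opn 3 # Ref 2 # Letter a # Cls 3 # Opn 4 # Ref 1 # Ref 3 # Cls 4 # S)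
     = deref ([Opn 1, Letter a, Cls 1, Opn 2] @ Cls 2 # Opn 3 # Ref 2 # Letter a # Cls 3 # Opn 4 # Ref 1 # Ref 3 # Cls 4 # S)"
    by (rule deref_unbound) auto
  have s3: "deref ([Opn 1, Letter a, Cls 1] @ Opn 2 # [] @ Cls 2 # [Opn 3] @ Ref 2 # Letter a # Cls 3 # Opn 4 # Ref 1 # Ref 3 # Cls 4 # S)
     = deref ([Opn 1, Letter a, Cls 1] @ Opn 2 # [] @ Cls 2 # [Opn 3] @ map Letter (g []) @ Letter a # Cls 3 # Opn 4 # Ref 1 # Ref 3 # Cls 4 # S)"
    by (rule deref_bound) auto
  have s4: "deref ([] @ Opn 1 # [Letter a] @ Cls 1 # [Opn 2, Cls 2, Opn 3, Letter a, Cls 3, Opn 4] @ Ref 1 # Ref 3 # Cls 4 # S)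
     = deref ([] @ Opn 1 # [Letter a] @ Cls 1 # [Opn 2, Cls 2, Opn 3, Letter a, Cls 3, Opn 4] @ map Letter (g [Letter a]) @ Ref 3 # Cls 4 # S)"
    by (rule deref_bound) auto
  have s5: "deref ([Opn 1, Letter a, Cls 1, Opn 2, Cls 2] @ Opn 3 # [Letter a] @ Cls 3 # [Opn 4, Letter a] @ Ref 3 # Cls 4 # S)
     = deref ([Opn 1, Letter a, Cls 1, Opn 2, Cls 2] @ Opn 3 # [Letter a] @ Cls 3 # [Opn 4, Letter a] @ map Letter (g [Letter a]) @ Cls 4 # S)"
    by (rule deref_bound) auto
  show ?thesis using s1 s2 s3 s4 s5 by (simp add: blk_def cb_def numeral_eq_Suc)
qed

lemma blk_next:
  assumes "rf Q"
  shows "deref (Q @ cb y1 y2 y3 y4 @ blk @ S) = deref (Q @ cb y1 y2 y3 y4 @ cb (Suc y4) y3 (Suc y3) (y4 + y3 + 2) @ S)"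
proof -
  let ?A = "Q @ Opn 1 # rl y1 @ Cls 1 # Opn 2 # rl y2 @ Cls 2 # Opn 3 # rl y3 @ [Cls 3]"
  let ?C = "Q @ cb y1 y2 y3 y4"
  have s1: "deref (?A @ Opn 4 # rl y4 @ Cls 4 # [Opn 1] @ Ref 4 # Letter a # Cls 1 # Opn 2 # Ref 3 # Cls 2 # Opn 3 # Ref 2 # Letter a # Cls 3 # Opn 4 # Ref 1 # Ref 3 # Cls 4 # S)
    = deref (?A @ Opn 4 # rl y4 @ Cls 4 # [Opn 1] @ map Letter (g (rl y4)) @ Letter a # Cls 1 # Opn 2 # Ref 3 # Cls 2 # Opn 3 # Ref 2 # Letter a # Cls 3 # Opn 4 # Ref 1 # Ref 3 # Cls 4 # S)"
    by (rule deref_bound) (auto simp: assms)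
  have s2: "deref ((Q @ Opn 1 # rl y1 @ Cls 1 # Opn 2 # rl y2 @ [Cls 2]) @ Opn 3 # rl y3 @ Cls 3 # (Opn 4 # rl y4 @ Cls 4 # Opn 1 # rl y4 @ [Letter a, Cls 1, Opn 2]) @ Ref 3 # Cls 2 # Opn 3 # Ref 2 # Letter a # Cls 3 # Opn 4 # Ref 1 # Ref 3 # Cls 4 # S)
    = deref ((Q @ Opn 1 # rl y1 @ Cls 1 # Opn 2 # rl y2 @ [Cls 2]) @ Opn 3 # rl y3 @ Cls 3 # (Opn 4 # rl y4 @ Cls 4 # Opn 1 # rl y4 @ [Letter a, Cls 1, Opn 2]) @ map Letter (g (rl y3)) @ Cls 2 # Opn 3 # Ref 2 # Letter a # Cls 3 # Opn 4 # Ref 1 # Ref 3 # Cls 4 # S)"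
    by (rule deref_bound) (auto simp: assms)
  have s3: "deref ((?C @ Opn 1 # rl y4 @ [Letter a, Cls 1]) @ Opn 2 # rl y3 @ Cls 2 # [Opn 3] @ Ref 2 # Letter a # Cls 3 # Opn 4 # Ref 1 # Ref 3 # Cls 4 # S)
    = deref ((?C @ Opn 1 # rl y4 @ [Letter a, Cls 1]) @ Opn 2 # rl y3 @ Cls 2 # [Opn 3] @ map Letter (g (rl y3)) @ Letter a # Cls 3 # Opn 4 # Ref 1 # Ref 3 # Cls 4 # S)"
    by (rule deref_bound) (auto simp: assms)
  have s4: "deref (?C @ Opn 1 # (rl y4 @ [Letter a]) @ Cls 1 # (Opn 2 # rl y3 @ Cls 2 # Opn 3 # rl y3 @ [Letter a, Cls 3, Opn 4]) @ Ref 1 # Ref 3 # Cls 4 # S)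
    = deref (?C @ Opn 1 # (rl y4 @ [Letter a]) @ Cls 1 # (Opn 2 # rl y3 @ Cls 2 # Opn 3 # rl y3 @ [Letter a, Cls 3, Opn 4]) @ map Letter (g (rl y4 @ [Letter a])) @ Ref 3 # Cls 4 # S)"
    by (rule deref_bound) (auto simp: assms)
  have s5: "deref ((?C @ Opn 1 # rl y4 @ Letter a # Cls 1 # Opn 2 # rl y3 @ [Cls 2]) @ Opn 3 # (rl y3 @ [Letter a]) @ Cls 3 # (Opn 4 # rl y4 @ [Letter a]) @ Ref 3 # Cls 4 # S)
    = deref ((?C @ Opn 1 # rl y4 @ Letter a # Cls 1 # Opn 2 # rl y3 @ [Cls 2]) @ Opn 3 # (rl y3 @ [Letter a]) @ Cls 3 # (Opn 4 # rl y4 @ [Letter a]) @ map Letter (g (rl y3 @ [Letter a])) @ Cls 4 # S)"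
    by (rule deref_bound) (auto simp: assms)
  have e: "cb (Suc y4) y3 (Suc y3) (y4 + y3 + 2) = Opn 1 # (rl y4 @ [Letter a]) @ Cls 1 # Opn 2 # rl y3 @ Cls 2 # Opn 3 # (rl y3 @ [Letter a]) @ Cls 3 # Opn 4 # (rl y4 @ [Letter a]) @ (rl y3 @ [Letter a]) @ [Cls 4]"
    by (simp add: cb_def replicate_add replicate_append_same numeral_eq_Suc)
  show ?thesis unfolding e using s1 s2 s3 s4 s5 by (simp add: blk_def cb_def)
qed

fun st :: "nat \<Rightarrow> nat \<times> nat" where
  "st 0 = (0, 0)"
| "st (Suc m) = (Suc (fst (st m)), snd (st m) + fst (st m) + 2)"

fun R :: "nat \<Rightarrow> sigma sym list" where
  "R 0 = []"
| "R (Suc m) = R m @ cb (Suc (snd (st m))) (fst (st m)) (Suc (fst (st m))) (snd (st m) + fst (st m) + 2)"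

fun tot :: "nat \<Rightarrow> nat" where
  "tot 0 = 0"
| "tot (Suc m) = tot m + (2 * snd (st m) + 3 * fst (st m) + 4)"

lemma rf_R: "rf (R m)"
  by (induction m) auto

lemma blk_step: "deref (R m @ blk @ S) = deref (R (Suc m) @ S)"
proof (cases m)
  case 0
  then show ?thesis using blk_first[of S] by (simp add: numeral_eq_Suc)
next
  case (Suc k)
  have e1: "R m @ blk @ S = R k @ cb (Suc (snd (st k))) (fst (st k)) (Suc (fst (st k))) (snd (st k) + fst (st k) + 2) @ blk @ S"
    using Suc by simp
  have e2: "R (Suc m) @ S = R k @ cb (Suc (snd (st k))) (fst (st k)) (Suc (fst (st k))) (snd (st k) + fst (st k) + 2) @
     cb (Suc (snd (st k) + fst (st k) + 2)) (Suc (fst (st k))) (Suc (Suc (fst (st k)))) (snd (st k) + fst (st k) + 2 + Suc (fst (st k)) + 2) @ S"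
    using Suc by simp
  show ?thesis unfolding e1 e2 by (rule blk_next[OF rf_R])
qed

lemma iter: "deref (R m @ concat (replicate n blk)) = deref (R (m + n))"
proof (induction n arbitrary: m)
  case 0
  then show ?case by simp
next
  case (Suc n)
  have "deref (R m @ concat (replicate (Suc n) blk)) = deref (R m @ blk @ concat (replicate n blk))" by simp
  also have "\<dots> = deref (R (Suc m) @ concat (replicate n blk))" by (rule blk_step)
  also have "\<dots> = deref (R (m + Suc n))" using Suc.IH[of "Suc m"] by simp
  finally show ?case .
qed

lemma sig_rep: "(xs::sigma list) = replicate (length xs) a"
  by (metis sigma.exhaust replicate_length_same)

lemma len_g_R: "length (g (R n)) = tot n"
  by (induction n) (auto simp: cb_def)

lemma g_R: "g (R n) = replicate (tot n) a"
  by (metis sig_rep len_g_R)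

lemma st_fst: "fst (st m) = m"
  by (induction m) auto

lemma st_closed: "fst (st m) = m \<and> 2 * snd (st m) = m * (m + 3)"
proof (induction m)
  case 0
  then show ?case by simp
next
  case (Suc m)
  then show ?case by (simp add: st_fst algebra_simps)
qed

lemma tot_closed: "6 * tot n = n * (n + 7) * (2 * n + 1)"
proof (induction n)
  case 0
  then show ?case by simp
next
  case (Suc n)
  have "6 * tot (Suc n) = 6 * tot n + 6 * (2 * snd (st n)) + 18 * fst (st n) + 24" by simp
  also have "\<dots> = n * (n + 7) * (2 * n + 1) + 6 * (n * (n + 3)) + 18 * n + 24"
    using Suc.IH st_closed[of n] by (simp only:)
  also have "\<dots> = Suc n * (Suc n + 7) * (2 * Suc n + 1)" by (simp add: algebra_simps)
  finally show ?case .
qed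

lemma RL_alpha: "RL alpha11 = {concat (replicate n blk) | n. True}"
proof -
  have body: "RL (Conc (Grp 1 (Conc (BRef 4) (Lit a)))
     (Conc (Grp 2 (BRef 3))
     (Conc (Grp 3 (Conc (BRef 2) (Lit a)))
           (Grp 4 (Conc (BRef 1) (BRef 3)))))) = {blk}"
    by (simp add: blk_def)
  show ?thesis
    unfolding alpha11_def RL.simps(6) body lstar_def
  proof safe
    fix ws :: "sigma sym list list" assume "set ws \<subseteq> {blk}"
    then have "ws = replicate (length ws) blk"
      by (metis replicate_length_same singletonD subsetD)
    then show "\<exists>n. concat ws = concat (replicate n blk) \<and> True" by metis
  next
    fix n show "\<exists>ws. concat (replicate n blk) = concat ws \<and> set ws \<subseteq> {blk}"
      by (rule exI[of _ "replicate n blk"]) auto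
  qed
qed

theorem mainTheorem11:
  shows "lang alpha11 = {replicate (n * (n + 7) * (2 * n + 1) div 6) a | n :: nat. True}"
proof -
  have d: "deref (concat (replicate n blk)) = Some (replicate (n * (n + 7) * (2 * n + 1) div 6) a)" for n
  proof -
    have "deref (concat (replicate n blk)) = deref (R n)" using iter[of 0 n] by simp
    also have "\<dots> = Some (g (R n))" by (rule deref_rf[OF rf_R])
    also have "tot n = n * (n + 7) * (2 * n + 1) div 6" using tot_closed[of n] by simp
    then have "g (R n) = replicate (n * (n + 7) * (2 * n + 1) div 6) a" by (simp add: g_R)
    finally show ?thesis .
  qed
  show ?thesis unfolding lang_def RL_alpha using d by auto
qed

end
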